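(* Let $G=(V,E)$ be a finite connected directed graph with $(i,j)\in E$ if and only if $(j,i)\in E$, and write $\partial i=\{j\in V:(j,i)\in E\}$. Let $f=(f_{ij})_{(i,j)\in E}$ with each $f_{ij}:\mathbb{R}\to\mathbb{R}$ continuous and strictly increasing and $f_{ij}(x)=-f_{ji}(-x)$. Let $(\phi,\pi)$ and $(\phi^*,\pi^* )$, with $\phi,\phi^*:E\to\mathbb{R}$ skew-symmetric and $\pi,\pi^*:V\to\mathbb{R}$, satisfy $\sum_{j\in\partial i}\phi_{ji}+q_i=0$, $\sum_{j\in\partial i}\phi^*_{ji}+q^*_i=0$ for all $i\in V$, and $\pi_j-\pi_i=-f_{ij}(\phi_{ij})$, $\pi^*_j-\pi^*_i=-f_{ij}(\phi^*_{ij})$ for all $(i,j)\in E$, for productions $q,q^*:V\to\mathbb{R}$. Let $T\subset V$. If $\pi_t=\pi_t^*$ for all $t\in T$ and $q_i\ge q_i^*$ for all $i\in V\setminus T$, then $q_t\le q_t^*$ for all $t\in T$. *)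

theory Defs
  imports "HOL-Analysis.Analysis"
begin

definition sym_graph :: "'v set \<Rightarrow> ('v \<times> 'v) set \<Rightarrow> bool" where
  "sym_graph V E \<longleftrightarrow> finite V \<and> E \<subseteq> V \<times> V \<and> (\<forall>i j. (i,j) \<in> E \<longleftrightarrow> (j,i) \<in> E)"

definition connected_graph :: "'v set \<Rightarrow> ('v \<times> 'v) set \<Rightarrow> bool" where
  "connected_graph V E \<longleftrightarrow> (\<forall>u\<in>V. \<forall>w\<in>V. (u,w) \<in> E\<^sup>*)"

definition nbhd :: "'v set \<Rightarrow> ('v \<times> 'v) set \<Rightarrow> 'v \<Rightarrow> 'v set" where
  "nbhd V E i = {j \<in> V. (j,i) \<in> E}"

definition is_solution ::
  "'v set \<Rightarrow> ('v \<times> 'v) set \<Rightarrow> ('v \<Rightarrow> 'v \<Rightarrow> real \<Rightarrow> real) \<Rightarrow> ('v \<Rightarrow> real)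
    \<Rightarrow> ('v \<Rightarrow> 'v \<Rightarrow> real) \<Rightarrow> ('v \<Rightarrow> real) \<Rightarrow> bool" where
  "is_solution V E f q \<phi> \<pi> \<longleftrightarrow>
     (\<forall>(i,j)\<in>E. \<phi> i j = - \<phi> j i) \<and>
     (\<forall>i\<in>V. (\<Sum>j\<in>nbhd V E i. \<phi> j i) + q i = 0) \<and>
     (\<forall>(i,j)\<in>E. \<pi> j - \<pi> i = - f i j (\<phi> i j))"

end

theory Submission
  imports Defs
begin

theorem corollary2:
  fixes V :: "'v set" and E :: "('v \<times> 'v) set"
    and f :: "'v \<Rightarrow> 'v \<Rightarrow> real \<Rightarrow> real"
    and \<phi> \<phi>' :: "'v \<Rightarrow> 'v \<Rightarrow> real" and \<pi> \<pi>' q q' :: "'v \<Rightarrow> real"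
    and T :: "'v set"
  assumes "sym_graph V E" and "connected_graph V E"
    and "\<forall>(i,j)\<in>E. continuous_on UNIV (f i j) \<and> strict_mono (f i j)"
    and "\<forall>(i,j)\<in>E. \<forall>x. f i j x = - f j i (- x)"
    and "is_solution V E f q \<phi> \<pi>"
    and "is_solution V E f q' \<phi>' \<pi>'"
    and "T \<subseteq> V"
    and "\<forall>t\<in>T. \<pi> t = \<pi>' t"
    and "\<forall>i\<in>V - T. q i \<ge> q' i"
  shows "\<forall>t\<in>T. q t \<le> q' t"
proof
  fix t assume tT: "t \<in> T"
  define d where "d i = \<pi> i - \<pi>' i" for i
  have fin: "finite V" and EV: "E \<subseteq> V \<times> V" and sym: "\<And>i j. (i,j) \<in> E \<longleftrightarrow> (j,i) \<in> E"
    using assms(1) unfolding sym_graph_def by auto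
  have sm: "\<And>i j. (i,j) \<in> E \<Longrightarrow> strict_mono (f i j)" using assms(3) by auto
  have fe: "\<And>i j. (i,j) \<in> E \<Longrightarrow> f i j (\<phi> i j) = \<pi> i - \<pi> j"
    using assms(5) unfolding is_solution_def by fastforce
  have fe': "\<And>i j. (i,j) \<in> E \<Longrightarrow> f i j (\<phi>' i j) = \<pi>' i - \<pi>' j"
    using assms(6) unfolding is_solution_def by fastforce
  have le: "\<And>i j. (i,j) \<in> E \<Longrightarrow> \<phi> i j \<le> \<phi>' i j \<longleftrightarrow> d i \<le> d j"
  proof -
    fix i j assume e: "(i,j) \<in> E"
    have "\<phi> i j \<le> \<phi>' i j \<longleftrightarrow> f i j (\<phi> i j) \<le> f i j (\<phi>' i j)"
      using sm[OF e] by (simp add: strict_mono_less_eq)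
    thus "\<phi> i j \<le> \<phi>' i j \<longleftrightarrow> d i \<le> d j" using fe[OF e] fe'[OF e] d_def by auto
  qed
  have eq: "\<And>i j. (i,j) \<in> E \<Longrightarrow> \<phi> i j = \<phi>' i j \<longleftrightarrow> d i = d j"
  proof -
    fix i j assume e: "(i,j) \<in> E"
    have "\<phi> i j = \<phi>' i j \<longleftrightarrow> f i j (\<phi> i j) = f i j (\<phi>' i j)"
      using strict_mono_eq[OF sm[OF e]] by simp
    thus "\<phi> i j = \<phi>' i j \<longleftrightarrow> d i = d j" using fe[OF e] fe'[OF e] d_def by auto
  qed
  have qd: "q i - q' i = (\<Sum>j\<in>nbhd V E i. \<phi> i j - \<phi>' i j)" if iV: "i \<in> V" for i
  proof -
    have s1: "q i = - (\<Sum>j\<in>nbhd V E i. \<phi> j i)" and s2: "q' i = - (\<Sum>j\<in>nbhd V E i. \<phi>' j i)"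
      using assms(5,6) iV unfolding is_solution_def by (auto simp: algebra_simps)
    have sk: "\<And>j. j \<in> nbhd V E i \<Longrightarrow> \<phi> j i = - \<phi> i j \<and> \<phi>' j i = - \<phi>' i j"
      using assms(5,6) unfolding is_solution_def nbhd_def by fastforce
    have "q i - q' i = (\<Sum>j\<in>nbhd V E i. \<phi>' j i - \<phi> j i)"
      using s1 s2 by (simp add: sum_subtractf)
    also have "\<dots> = (\<Sum>j\<in>nbhd V E i. \<phi> i j - \<phi>' i j)"
      by (rule sum.cong) (use sk in auto)
    finally show ?thesis .
  qed
  have finN: "\<And>i. finite (nbhd V E i)" using fin unfolding nbhd_def by auto
  have tV: "t \<in> V" using tT assms(7) by auto
  define m where "m = Min (d ` V)"
  have mle: "\<And>i. i \<in> V \<Longrightarrow> m \<le> d i" using fin m_def by auto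
  obtain i0 where i0: "i0 \<in> V" "d i0 = m" using fin tV m_def
    by (metis Min_in empty_iff finite_imageI image_iff image_is_empty)
  have m0: "m \<ge> 0"
  proof (rule ccontr)
    assume neg: "\<not> m \<ge> 0"
    have step: "d j = m" if ij: "(i,j) \<in> E" and di: "d i = m" for i j
    proof -
      have iV: "i \<in> V" using ij EV by auto
      have iT: "i \<notin> T" using di neg assms(8) d_def by auto
      have nonpos: "\<And>k. k \<in> nbhd V E i \<Longrightarrow> \<phi> i k - \<phi>' i k \<le> 0"
      proof -
        fix k assume "k \<in> nbhd V E i"
        hence "(k,i) \<in> E" "k \<in> V" unfolding nbhd_def by auto
        hence e: "(i,k) \<in> E" "k \<in> V" using sym by blast+
        show "\<phi> i k - \<phi>' i k \<le> 0" using le[OF e(1)] mle[OF e(2)] di by auto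
      qed
      have "q i - q' i \<ge> 0" using assms(9) iV iT by auto
      hence "(\<Sum>k\<in>nbhd V E i. \<phi> i k - \<phi>' i k) = 0"
        using qd[OF iV] sum_nonpos[of "nbhd V E i" "\<lambda>k. \<phi> i k - \<phi>' i k"] nonpos by auto
      hence "(\<Sum>k\<in>nbhd V E i. \<phi>' i k - \<phi> i k) = 0"
        by (simp add: sum_subtractf)
      moreover have "\<And>k. k \<in> nbhd V E i \<Longrightarrow> \<phi>' i k - \<phi> i k \<ge> 0" using nonpos by force
      ultimately have "\<forall>k\<in>nbhd V E i. \<phi>' i k - \<phi> i k = 0"
        using sum_nonneg_eq_0_iff[OF finN[of i], of "\<lambda>k. \<phi>' i k - \<phi> i k"] by simp
      moreover have "(j,i) \<in> E" using ij sym by blast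
      hence "j \<in> nbhd V E i" using EV unfolding nbhd_def by auto
      ultimately have "\<phi> i j = \<phi>' i j" by auto
      thus ?thesis using eq[OF ij] di by auto
    qed
    have "(i0, t) \<in> E\<^sup>*" using assms(2) i0 tV unfolding connected_graph_def by auto
    hence "d t = m"
      by (induction rule: rtrancl_induct) (use i0 step in auto)
    moreover have "d t = 0" using assms(8) tT d_def by auto
    ultimately show False using neg by auto
  qed
  have nonpos: "\<And>k. k \<in> nbhd V E t \<Longrightarrow> \<phi> t k - \<phi>' t k \<le> 0"
  proof -
    fix k assume k: "k \<in> nbhd V E t"
    hence "(k,t) \<in> E" "k \<in> V" unfolding nbhd_def by auto
    hence e: "(t,k) \<in> E" "k \<in> V" using sym by blast+
    have "d t = 0" using assms(8) tT d_def by auto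
    hence "d t \<le> d k" using mle[OF e(2)] m0 by auto
    thus "\<phi> t k - \<phi>' t k \<le> 0" using le[OF e(1)] by auto
  qed
  show "q t \<le> q' t" using qd[OF tV] sum_nonpos[of "nbhd V E t" "\<lambda>k. \<phi> t k - \<phi>' t k"] nonpos by auto
qed

end
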